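(* Let $a>0$, $\alpha\in[0,1)$, $f\in\mathcal C_a$ and $\eta\in(0,1)$. Then $\mathrm{Sh}_\alpha(f^{\pm\eta})=(\mathrm{Sh}_\alpha(f))^{\pm\eta}$.
   Context: For $b>0$, $\mathcal C_b$ is the set of $C^1$ functions $f:\mathbb R\to\mathbb R$ that are even, satisfy $f(s)=|s|$ for $|s|\ge b$ and are strictly convex on $[-b,b]$. For any function $g:\mathbb R\to\mathbb R$, $g^{\pm\eta}(s)=(1\pm\frac\eta2)g\big(s/(1\pm\frac\eta2)\big)$; if $f\in\mathcal C_a$ then $f^{\pm\eta}\in\mathcal C_{(2\pm\eta)a/2}$. For $f\in\mathcal C_b$: $F_\alpha(s)=f(s)-\alpha s$, $x_\alpha^+=(f')^{-1}(\alpha)\in[0,b)$ (inverse of $f':[-b,b]\to[-1,1]$); let $F_\alpha^{-1}$ be the inverse of $F_\alpha|_{[x_\alpha^+,\infty)}$, $\phi=F_\alpha^{-1}\circ F_\alpha$, $\delta_x=(1-\alpha)^{-1}F_\alpha(x)-\phi(x)$, $s_\alpha=x_\alpha^++\delta_{x_\alpha^+}$; $x\mapsto x+\delta_x$ is an increasing bijection $(-\infty,x_\alpha^+]\to(-\infty,s_\alpha]$ with inverse $\tau$. Define $\mathrm{Sh}_\alpha(f)(x)=\alpha x+F_\alpha(\tau(x))$ for $x\le s_\alpha$ and $=x$ for $x>s_\alpha$. The identity holds for both signs. *)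

theory Defs
  imports "HOL-Analysis.Analysis"
begin

definition strictly_convex_on :: "real set \<Rightarrow> (real \<Rightarrow> real) \<Rightarrow> bool" where
  "strictly_convex_on S g \<longleftrightarrow>
     (\<forall>x\<in>S. \<forall>y\<in>S. \<forall>t. x \<noteq> y \<and> 0 < t \<and> t < 1 \<longrightarrow>
        g ((1 - t) * x + t * y) < (1 - t) * g x + t * g y)"

definition classC :: "real \<Rightarrow> (real \<Rightarrow> real) set" where
  "classC b = {f. (\<forall>x. f differentiable (at x)) \<and> continuous_on UNIV (deriv f)
      \<and> (\<forall>s. f (- s) = f s) \<and> (\<forall>s. b \<le> \<bar>s\<bar> \<longrightarrow> f s = \<bar>s\<bar>)
      \<and> strictly_convex_on {-b..b} f}"

text \<open>g^{\<pm>\<eta>} with c = 1 \<pm> \<eta>/2: s \<mapsto> c * g (s / c).\<close>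
definition dil :: "real \<Rightarrow> (real \<Rightarrow> real) \<Rightarrow> real \<Rightarrow> real" where
  "dil c g = (\<lambda>s. c * g (s / c))"

definition Falpha :: "(real \<Rightarrow> real) \<Rightarrow> real \<Rightarrow> real \<Rightarrow> real" where
  "Falpha f \<alpha> s = f s - \<alpha> * s"

definition xplus :: "(real \<Rightarrow> real) \<Rightarrow> real \<Rightarrow> real" where
  "xplus f \<alpha> = (THE x. deriv f x = \<alpha>)"

definition Finv :: "(real \<Rightarrow> real) \<Rightarrow> real \<Rightarrow> real \<Rightarrow> real" where
  "Finv f \<alpha> y = (THE t. xplus f \<alpha> \<le> t \<and> Falpha f \<alpha> t = y)"

definition phi :: "(real \<Rightarrow> real) \<Rightarrow> real \<Rightarrow> real \<Rightarrow> real" where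
  "phi f \<alpha> x = Finv f \<alpha> (Falpha f \<alpha> x)"

definition delta :: "(real \<Rightarrow> real) \<Rightarrow> real \<Rightarrow> real \<Rightarrow> real" where
  "delta f \<alpha> x = Falpha f \<alpha> x / (1 - \<alpha>) - phi f \<alpha> x"

definition salpha :: "(real \<Rightarrow> real) \<Rightarrow> real \<Rightarrow> real" where
  "salpha f \<alpha> = xplus f \<alpha> + delta f \<alpha> (xplus f \<alpha>)"

definition tau :: "(real \<Rightarrow> real) \<Rightarrow> real \<Rightarrow> real \<Rightarrow> real" where
  "tau f \<alpha> y = (THE x. x \<le> xplus f \<alpha> \<and> x + delta f \<alpha> x = y)"

definition Sh :: "real \<Rightarrow> (real \<Rightarrow> real) \<Rightarrow> real \<Rightarrow> real" where
  "Sh \<alpha> f x = (if x \<le> salpha f \<alpha> then \<alpha> * x + Falpha f \<alpha> (tau f \<alpha> x) else x)"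

end

theory Submission
  imports Defs
begin

context
  fixes f :: "real \<Rightarrow> real" and a \<alpha> :: real
  assumes fC: "f \<in> classC a" and apos: "a > 0" and al0: "0 \<le> \<alpha>" and al1: "\<alpha> < 1"
begin

lemma fD: "(f has_real_derivative deriv f x) (at x)"
  using fC by (simp add: classC_def DERIV_deriv_iff_real_differentiable)

lemma Dcont: "continuous_on UNIV (deriv f)" using fC by (simp add: classC_def)

lemma fabs: "a \<le> \<bar>s\<bar> \<Longrightarrow> f s = \<bar>s\<bar>" using fC by (simp add: classC_def)

lemma D_gt: "x > a \<Longrightarrow> deriv f x = 1"
proof -
  assume x: "x > a"
  have "((\<lambda>y. y) has_real_derivative 1) (at x)" by (rule DERIV_ident)
  then have "(f has_real_derivative 1) (at x)"
    apply (rule has_field_derivative_transform_within_open[where S="{a<..}"])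
    using x apos fabs by auto
  then show ?thesis by (rule DERIV_imp_deriv)
qed

lemma D_lt: "x < -a \<Longrightarrow> deriv f x = -1"
proof -
  assume x: "x < -a"
  have "((\<lambda>y. - y) has_real_derivative -1) (at x)" by (auto intro!: derivative_eq_intros)
  then have "(f has_real_derivative -1) (at x)"
    apply (rule has_field_derivative_transform_within_open[where S="{..< -a}"])
    using x apos fabs by auto
  then show ?thesis by (rule DERIV_imp_deriv)
qed

lemma D_a: "deriv f a = 1"
proof -
  have c: "closed {x \<in> UNIV. deriv f x = 1}"
    by (rule continuous_closed_preimage_constant[OF Dcont closed_UNIV])
  have "{a<..} \<subseteq> {x \<in> UNIV. deriv f x = 1}" using D_gt by auto
  then have "closure {a<..} \<subseteq> {x \<in> UNIV. deriv f x = 1}" using c by (rule closure_minimal)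
  then show ?thesis by auto
qed

lemma D_ma: "deriv f (-a) = -1"
proof -
  have c: "closed {x \<in> UNIV. deriv f x = -1}"
    by (rule continuous_closed_preimage_constant[OF Dcont closed_UNIV])
  have "{..< -a} \<subseteq> {x \<in> UNIV. deriv f x = -1}" using D_lt by auto
  then have "closure {..< -a} \<subseteq> {x \<in> UNIV. deriv f x = -1}" using c by (rule closure_minimal)
  then show ?thesis by auto
qed

lemma sconv: "x \<in> {-a..a} \<Longrightarrow> y \<in> {-a..a} \<Longrightarrow> x \<noteq> y \<Longrightarrow> 0 < t \<Longrightarrow> t < 1 \<Longrightarrow>
   f ((1 - t) * x + t * y) < (1 - t) * f x + t * f y"
  using fC unfolding classC_def strictly_convex_on_def by blast

lemma conv: "convex_on {-a..a} f"
proof (rule convex_onI)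
  fix t x y :: real assume "0 < t" "t < 1" "x \<in> {-a..a}" "y \<in> {-a..a}"
  then show "f ((1 - t) *\<^sub>R x + t *\<^sub>R y) \<le> (1 - t) * f x + t * f y"
    using sconv[of x y t] by (cases "x = y") (auto simp: algebra_simps)
qed (rule convex_real_interval)

lemma tangent: "c \<in> {-a<..<a} \<Longrightarrow> z \<in> {-a..a} \<Longrightarrow> f z - f c \<ge> deriv f c * (z - c)"
  by (rule convex_on_imp_above_tangent[OF conv]) (auto intro: has_field_derivative_at_within fD)

lemma Dmono: "-a < x \<Longrightarrow> x < y \<Longrightarrow> y < a \<Longrightarrow> deriv f x < deriv f y"
proof -
  assume xy: "-a < x" "x < y" "y < a"
  define m where "m = (x + y) / 2"
  define d where "d = y - x"
  have d: "d > 0" using xy by (simp add: d_def)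
  have "f ((1 - 1/2) * x + 1/2 * y) < (1 - 1/2) * f x + 1/2 * f y"
    by (rule sconv) (use xy in auto)
  moreover have "(1 - 1/2) * x + 1/2 * y = m" by (simp add: m_def)
  ultimately have s: "f m < (f x + f y) / 2" by simp
  have t1: "f m - f x \<ge> deriv f x * (m - x)" by (rule tangent) (use xy in \<open>auto simp: m_def\<close>)
  have t2: "f m - f y \<ge> deriv f y * (m - y)" by (rule tangent) (use xy in \<open>auto simp: m_def\<close>)
  have "m - x = d / 2" "m - y = - (d/2)" by (auto simp: m_def d_def field_simps)
  then have e: "deriv f x * (m - x) = deriv f x * d / 2" "deriv f y * (m - y) = - (deriv f y * d / 2)"
    by auto
  then have "f m - f x \<ge> deriv f x * d / 2" "f m - f y \<ge> - (deriv f y * d / 2)"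
    using t1 t2 by linarith+
  then have "deriv f x * d < deriv f y * d" using s by argo
  then show ?thesis using d by simp
qed


lemma D_le1: "deriv f x \<le> 1"
proof -
  consider "x \<ge> a" | "x < -a" | "x = -a" | "-a < x \<and> x < a" by linarith
  then show ?thesis
  proof cases
    case 1 then show ?thesis using D_gt D_a by (cases "x = a") auto
  next
    case 2 then show ?thesis using D_lt by auto
  next
    case 3 then show ?thesis using D_ma by auto
  next
    case 4
    show ?thesis
    proof (rule ccontr)
      assume "\<not> deriv f x \<le> 1"
      then have e: "deriv f x - 1 > 0" by simp
      have "isCont (deriv f) a" using Dcont by (simp add: continuous_on_eq_continuous_at)
      then have "(deriv f \<longlongrightarrow> deriv f a) (at a)" by (simp add: isCont_def)
      then obtain s where s: "s > 0" "\<And>y. y \<noteq> a \<Longrightarrow> dist y a < s \<Longrightarrow> dist (deriv f y) (deriv f a) < deriv f x - 1"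
        using e unfolding tendsto_iff eventually_at by blast
      define y where "y = max ((x + a) / 2) (a - s / 2)"
      have y1: "(x + a) / 2 \<le> y" "a - s / 2 \<le> y" "y = (x + a) / 2 \<or> y = a - s / 2"
        by (auto simp: y_def max_def)
      have y: "x < y" "y < a" "y \<noteq> a" "dist y a < s" using 4 s y1 by (auto simp: dist_real_def)
      have "deriv f y < deriv f x" using s(2)[OF y(3,4)] D_a by (simp add: dist_real_def)
      moreover have "deriv f x < deriv f y" using Dmono[of x y] 4 y by auto
      ultimately show False by simp
    qed
  qed
qed

lemma xf_ex: "\<exists>x. -a < x \<and> x < a \<and> deriv f x = \<alpha>"
proof -
  have "\<exists>x\<ge>-a. x \<le> a \<and> deriv f x = \<alpha>"
  proof (rule IVT')
    show "deriv f (- a) \<le> \<alpha>" using D_ma al0 by simp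
    show "\<alpha> \<le> deriv f a" using D_a al1 by simp
    show "- a \<le> a" using apos by simp
    show "continuous_on {-a..a} (deriv f)" using continuous_on_subset[OF Dcont] by blast
  qed
  then obtain x where "-a \<le> x" "x \<le> a" "deriv f x = \<alpha>" by blast
  moreover have "x \<noteq> a" "x \<noteq> -a" using D_a D_ma al0 al1 \<open>deriv f x = \<alpha>\<close> by auto
  ultimately show ?thesis by (intro exI[of _ x]) auto
qed

lemma D_eq_in: "deriv f x = \<alpha> \<Longrightarrow> -a < x \<and> x < a"
proof -
  assume e: "deriv f x = \<alpha>"
  have "\<not> x > a" using D_gt[of x] e al1 by auto
  moreover have "x \<noteq> a" using D_a e al1 by auto
  moreover have "\<not> x < -a" using D_lt[of x] e al0 by auto
  moreover have "x \<noteq> -a" using D_ma e al0 by auto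
  ultimately show ?thesis by auto
qed

lemma D_uniq: "deriv f x = \<alpha> \<Longrightarrow> deriv f y = \<alpha> \<Longrightarrow> x = y"
  using D_eq_in[of x] D_eq_in[of y] Dmono[of x y] Dmono[of y x]
  by (cases x y rule: linorder_cases) auto

lemma xf_eq: "deriv f x = \<alpha> \<Longrightarrow> xplus f \<alpha> = x"
  unfolding xplus_def by (rule the_equality) (assumption, rule D_uniq)

lemma xf_D: "deriv f (xplus f \<alpha>) = \<alpha>" and xf_in: "-a < xplus f \<alpha>" "xplus f \<alpha> < a"
proof -
  obtain x where x: "-a < x" "x < a" "deriv f x = \<alpha>" using xf_ex by blast
  have "xplus f \<alpha> = x" by (rule xf_eq) (rule x(3))
  then show "deriv f (xplus f \<alpha>) = \<alpha>" "-a < xplus f \<alpha>" "xplus f \<alpha> < a" using x by auto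
qed

lemma D_gt_xf: "x > xplus f \<alpha> \<Longrightarrow> deriv f x > \<alpha>"
proof -
  assume x: "x > xplus f \<alpha>"
  show ?thesis
  proof (cases "x < a")
    case True then show ?thesis using Dmono[of "xplus f \<alpha>" x] x xf_in xf_D by auto
  next
    case False then show ?thesis using D_gt D_a al1 by (cases "x = a") auto
  qed
qed

lemma D_lt_xf: "x < xplus f \<alpha> \<Longrightarrow> deriv f x < \<alpha>"
proof -
  assume x: "x < xplus f \<alpha>"
  show ?thesis
  proof (cases "x > -a")
    case True then show ?thesis using Dmono[of x "xplus f \<alpha>"] x xf_in xf_D by auto
  next
    case False then show ?thesis using D_lt D_ma al0 by (cases "x = -a") auto
  qed
qed

lemma F_fun: "Falpha f \<alpha> = (\<lambda>s. f s - \<alpha> * s)" by (rule ext) (simp add: Falpha_def)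

lemma FD: "(Falpha f \<alpha> has_real_derivative deriv f x - \<alpha>) (at x)"
  unfolding F_fun by (auto intro!: derivative_eq_intros fD)

lemma Fcont: "continuous_on S (Falpha f \<alpha>)"
  using FD by (meson DERIV_isCont continuous_at_imp_continuous_on)

lemma F_inc: assumes "xplus f \<alpha> \<le> x" "x < y" shows "Falpha f \<alpha> x < Falpha f \<alpha> y"
proof (rule DERIV_pos_imp_increasing_open[OF assms(2)])
  fix t assume "x < t" "t < y"
  with assms have "t > xplus f \<alpha>" by simp
  then show "\<exists>y. (Falpha f \<alpha> has_real_derivative y) (at t) \<and> 0 < y"
    using FD[of t] D_gt_xf[of t] by auto
qed (rule Fcont)

lemma F_dec: assumes "x < y" "y \<le> xplus f \<alpha>" shows "Falpha f \<alpha> x > Falpha f \<alpha> y"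
proof (rule DERIV_neg_imp_decreasing_open[OF assms(1)])
  fix t assume "x < t" "t < y"
  with assms have "t < xplus f \<alpha>" by simp
  then show "\<exists>z. (Falpha f \<alpha> has_real_derivative z) (at t) \<and> z < 0"
    using FD[of t] D_lt_xf[of t] by auto
qed (rule Fcont)

lemma F_big: "a \<le> t \<Longrightarrow> Falpha f \<alpha> t = (1 - \<alpha>) * t"
  using fabs[of t] apos by (simp add: Falpha_def algebra_simps)

lemma F_small: "t \<le> -a \<Longrightarrow> Falpha f \<alpha> t = - (1 + \<alpha>) * t"
  using fabs[of t] apos by (simp add: Falpha_def algebra_simps)

lemma F_ge_min: "Falpha f \<alpha> (xplus f \<alpha>) \<le> Falpha f \<alpha> x"
  using F_inc[of "xplus f \<alpha>" x] F_dec[of x "xplus f \<alpha>"] by (cases x "xplus f \<alpha>" rule: linorder_cases) auto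

lemma Finv_ex: "Falpha f \<alpha> (xplus f \<alpha>) \<le> y \<Longrightarrow>
   \<exists>t. xplus f \<alpha> \<le> t \<and> t \<le> max a (y / (1 - \<alpha>)) \<and> Falpha f \<alpha> t = y"
proof -
  assume y: "Falpha f \<alpha> (xplus f \<alpha>) \<le> y"
  define T where "T = max a (y / (1 - \<alpha>))"
  have T: "xplus f \<alpha> \<le> T" "a \<le> T" using xf_in by (auto simp: T_def)
  have "(1 - \<alpha>) * (y / (1 - \<alpha>)) \<le> (1 - \<alpha>) * T"
    by (rule mult_left_mono) (use al1 in \<open>auto simp: T_def\<close>)
  then have "y \<le> Falpha f \<alpha> T" using F_big[OF T(2)] al1 by simp
  then have "\<exists>t\<ge>xplus f \<alpha>. t \<le> T \<and> Falpha f \<alpha> t = y"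
    by (intro IVT' y T Fcont)
  then show ?thesis by (auto simp: T_def)
qed

lemma F_inj: "xplus f \<alpha> \<le> t \<Longrightarrow> xplus f \<alpha> \<le> u \<Longrightarrow> Falpha f \<alpha> t = Falpha f \<alpha> u \<Longrightarrow> t = u"
  using F_inc[of t u] F_inc[of u t] by (cases t u rule: linorder_cases) auto

lemma Finv_eq: "xplus f \<alpha> \<le> t \<Longrightarrow> Falpha f \<alpha> t = y \<Longrightarrow> Finv f \<alpha> y = t"
  unfolding Finv_def by (rule the_equality) (auto intro: F_inj)

lemma phi_prop: "xplus f \<alpha> \<le> phi f \<alpha> x \<and> Falpha f \<alpha> (phi f \<alpha> x) = Falpha f \<alpha> x"
proof -
  obtain t where "xplus f \<alpha> \<le> t" "Falpha f \<alpha> t = Falpha f \<alpha> x" using Finv_ex[OF F_ge_min[of x]] by blast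
  moreover from this have "Finv f \<alpha> (Falpha f \<alpha> x) = t" by (intro Finv_eq)
  ultimately show ?thesis by (simp add: phi_def)
qed


lemma f_lip: assumes "p2 \<le> p1" shows "f p1 - f p2 \<le> p1 - p2"
proof -
  have "(\<lambda>t. t - f t) p2 \<le> (\<lambda>t. t - f t) p1"
  proof (rule DERIV_nonneg_imp_nondecreasing[OF assms])
    fix t show "\<exists>y. ((\<lambda>t. t - f t) has_real_derivative y) (at t) \<and> y \<ge> 0"
      using D_le1[of t] by (intro exI[of _ "1 - deriv f t"]) (auto intro!: derivative_eq_intros fD)
  qed
  then show ?thesis by simp
qed

lemma h_mono: assumes "x1 < x2" "x2 \<le> xplus f \<alpha>"
  shows "x2 - x1 \<le> (x2 + delta f \<alpha> x2) - (x1 + delta f \<alpha> x1)"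
proof -
  define p1 where "p1 = phi f \<alpha> x1"
  define p2 where "p2 = phi f \<alpha> x2"
  have P: "xplus f \<alpha> \<le> p1" "Falpha f \<alpha> p1 = Falpha f \<alpha> x1" "xplus f \<alpha> \<le> p2" "Falpha f \<alpha> p2 = Falpha f \<alpha> x2"
    using phi_prop by (auto simp: p1_def p2_def)
  have Fx: "Falpha f \<alpha> x2 < Falpha f \<alpha> x1" using F_dec assms by blast
  have pp: "p2 \<le> p1"
  proof (rule ccontr)
    assume "\<not> p2 \<le> p1"
    then have "Falpha f \<alpha> p1 < Falpha f \<alpha> p2" using F_inc[OF P(1)] by simp
    then show False using Fx P by simp
  qed
  have e1: "Falpha f \<alpha> p1 - Falpha f \<alpha> p2 = (f p1 - f p2) - \<alpha> * (p1 - p2)" by (simp add: Falpha_def algebra_simps)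
  have e2: "(1 - \<alpha>) * (p1 - p2) = (p1 - p2) - \<alpha> * (p1 - p2)" by (simp add: algebra_simps)
  have lip: "Falpha f \<alpha> p1 - Falpha f \<alpha> p2 \<le> (1 - \<alpha>) * (p1 - p2)" using f_lip[OF pp] e1 e2 by linarith
  have e3: "- (p1 - p2) * (1 - \<alpha>) = - ((1 - \<alpha>) * (p1 - p2))" by (simp add: algebra_simps)
  have "- (p1 - p2) * (1 - \<alpha>) \<le> Falpha f \<alpha> x2 - Falpha f \<alpha> x1" using lip P e3 by linarith
  then have q: "- (p1 - p2) \<le> (Falpha f \<alpha> x2 - Falpha f \<alpha> x1) / (1 - \<alpha>)"
    using al1 by (simp add: pos_le_divide_eq)
  have "delta f \<alpha> x2 - delta f \<alpha> x1 = (Falpha f \<alpha> x2 - Falpha f \<alpha> x1) / (1 - \<alpha>) - (p2 - p1)"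
    by (simp add: delta_def p1_def p2_def diff_divide_distrib)
  then show ?thesis using q by linarith
qed

lemma h_inj: "x \<le> xplus f \<alpha> \<Longrightarrow> y \<le> xplus f \<alpha> \<Longrightarrow> x + delta f \<alpha> x = y + delta f \<alpha> y \<Longrightarrow> x = y"
  using h_mono[of x y] h_mono[of y x] by (cases x y rule: linorder_cases) auto

lemma h_small: assumes "x \<le> -a" shows "delta f \<alpha> x = 0"
proof -
  define t where "t = - (1 + \<alpha>) * x / (1 - \<alpha>)"
  have Fx: "Falpha f \<alpha> x = - (1 + \<alpha>) * x" using F_small[OF assms] .
  have "(1 + \<alpha>) * a \<le> (1 + \<alpha>) * (- x)" by (rule mult_left_mono) (use assms al0 in auto)
  moreover have "0 \<le> \<alpha> * a" using al0 apos by simp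
  then have "(1 - \<alpha>) * a \<le> (1 + \<alpha>) * a" by (simp add: algebra_simps)
  moreover have "- (1 + \<alpha>) * x = (1 + \<alpha>) * (- x)" by (simp add: algebra_simps)
  ultimately have "a * (1 - \<alpha>) \<le> - (1 + \<alpha>) * x" by (simp add: mult.commute)
  then have ta: "a \<le> t" using al1 by (simp add: t_def pos_le_divide_eq)
  have Ft: "Falpha f \<alpha> t = Falpha f \<alpha> x" using F_big[OF ta] Fx al1 by (simp add: t_def)
  have "xplus f \<alpha> \<le> t" using ta xf_in by simp
  then have "phi f \<alpha> x = t" using Finv_eq Ft by (simp add: phi_def)
  then show ?thesis by (simp add: delta_def Fx t_def)
qed

lemma phi_fun: "phi f \<alpha> = (\<lambda>x. Finv f \<alpha> (Falpha f \<alpha> x))" by (rule ext) (simp add: phi_def)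

lemma phi_cont: assumes "L \<le> xplus f \<alpha>" shows "continuous_on {L..xplus f \<alpha>} (phi f \<alpha>)"
proof -
  define M where "M = max a (Falpha f \<alpha> L / (1 - \<alpha>))"
  have ci: "continuous_on (Falpha f \<alpha> ` {xplus f \<alpha>..M}) (Finv f \<alpha>)"
    by (rule continuous_on_inv[OF Fcont compact_Icc]) (auto intro: Finv_eq)
  have sub: "Falpha f \<alpha> ` {L..xplus f \<alpha>} \<subseteq> Falpha f \<alpha> ` {xplus f \<alpha>..M}"
  proof
    fix y assume "y \<in> Falpha f \<alpha> ` {L..xplus f \<alpha>}"
    then obtain x where x: "L \<le> x" "x \<le> xplus f \<alpha>" "y = Falpha f \<alpha> x" by auto
    have FL: "Falpha f \<alpha> x \<le> Falpha f \<alpha> L" using F_dec[of L x] x by (cases "L = x") auto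
    obtain t where t: "xplus f \<alpha> \<le> t" "t \<le> max a (Falpha f \<alpha> x / (1 - \<alpha>))" "Falpha f \<alpha> t = Falpha f \<alpha> x"
      using Finv_ex[OF F_ge_min[of x]] by blast
    have "Falpha f \<alpha> x / (1 - \<alpha>) \<le> Falpha f \<alpha> L / (1 - \<alpha>)" using FL al1 by (simp add: divide_right_mono)
    then have "t \<le> M" using t(2) by (auto simp: M_def)
    then show "y \<in> Falpha f \<alpha> ` {xplus f \<alpha>..M}" using t x by (auto intro!: rev_image_eqI[of t])
  qed
  have "continuous_on {L..xplus f \<alpha>} (\<lambda>x. Finv f \<alpha> (Falpha f \<alpha> x))"
    by (rule continuous_on_compose2[OF ci Fcont sub])
  then show ?thesis by (simp add: phi_fun)
qed

lemma h_cont: assumes "L \<le> xplus f \<alpha>" shows "continuous_on {L..xplus f \<alpha>} (\<lambda>x. x + delta f \<alpha> x)"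
proof -
  have "(\<lambda>x. x + delta f \<alpha> x) = (\<lambda>x. x + (Falpha f \<alpha> x / (1 - \<alpha>) - phi f \<alpha> x))"
    by (rule ext) (simp add: delta_def)
  moreover have "continuous_on {L..xplus f \<alpha>} (\<lambda>x. x + (Falpha f \<alpha> x / (1 - \<alpha>) - phi f \<alpha> x))"
    using al1 by (intro continuous_intros Fcont phi_cont assms) auto
  ultimately show ?thesis by (simp only:)
qed

lemma tau_ex: assumes "y \<le> salpha f \<alpha>" shows "\<exists>x. x \<le> xplus f \<alpha> \<and> x + delta f \<alpha> x = y"
proof (cases "y \<le> -a")
  case True
  then show ?thesis using h_small[OF True] xf_in by (intro exI[of _ y]) auto
next
  case False
  have "\<exists>x\<ge>-a. x \<le> xplus f \<alpha> \<and> x + delta f \<alpha> x = y"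
  proof (rule IVT'[of "\<lambda>x. x + delta f \<alpha> x"])
    show "- a + delta f \<alpha> (- a) \<le> y" using h_small[of "-a"] False by simp
    show "y \<le> xplus f \<alpha> + delta f \<alpha> (xplus f \<alpha>)" using assms by (simp add: salpha_def)
    show "- a \<le> xplus f \<alpha>" using xf_in by simp
    show "continuous_on {- a..xplus f \<alpha>} (\<lambda>x. x + delta f \<alpha> x)" using h_cont xf_in by simp
  qed
  then show ?thesis by blast
qed

lemma tau_eq: "x \<le> xplus f \<alpha> \<Longrightarrow> x + delta f \<alpha> x = y \<Longrightarrow> tau f \<alpha> y = x"
  unfolding tau_def by (rule the_equality) (auto intro: h_inj)

lemma tau_prop: assumes "y \<le> salpha f \<alpha>" shows "tau f \<alpha> y \<le> xplus f \<alpha> \<and> tau f \<alpha> y + delta f \<alpha> (tau f \<alpha> y) = y"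
proof -
  obtain x where "x \<le> xplus f \<alpha>" "x + delta f \<alpha> x = y" using tau_ex[OF assms] by blast
  moreover from this have "tau f \<alpha> y = x" by (rule tau_eq)
  ultimately show ?thesis by simp
qed


lemma dil_deriv: assumes c: "c > 0" shows "deriv (dil c f) x = deriv f (x / c)"
proof -
  have "((\<lambda>s. s / c) has_real_derivative 1 / c) (at x)" using c by (auto intro!: derivative_eq_intros)
  from DERIV_chain2[OF fD this] have "((\<lambda>s. f (s / c)) has_real_derivative deriv f (x / c) * (1 / c)) (at x)" .
  from DERIV_cmult[OF this, of c] have "(dil c f has_real_derivative deriv f (x / c)) (at x)"
    using c by (simp add: dil_def)
  then show ?thesis by (rule DERIV_imp_deriv)
qed

lemma xplus_dil: assumes c: "c > 0" shows "xplus (dil c f) \<alpha> = c * xplus f \<alpha>"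
proof -
  have "xplus (dil c f) \<alpha> = (THE x. deriv (dil c f) x = \<alpha>)" by (simp add: xplus_def)
  also have "\<dots> = c * xplus f \<alpha>"
  proof (rule the_equality)
    show "deriv (dil c f) (c * xplus f \<alpha>) = \<alpha>" using c xf_D by (simp add: dil_deriv)
  next
    fix x assume "deriv (dil c f) x = \<alpha>"
    then have "deriv f (x / c) = \<alpha>" using c by (simp add: dil_deriv)
    then have "xplus f \<alpha> = x / c" by (rule xf_eq)
    then show "x = c * xplus f \<alpha>" using c by simp
  qed
  finally show ?thesis .
qed

lemma Falpha_dil: assumes c: "c > 0" shows "Falpha (dil c f) \<alpha> s = c * Falpha f \<alpha> (s / c)"
  using c by (simp add: Falpha_def dil_def algebra_simps)

lemma Finv_dil: assumes c: "c > 0" and y: "Falpha f \<alpha> (xplus f \<alpha>) \<le> y / c"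
  shows "Finv (dil c f) \<alpha> y = c * Finv f \<alpha> (y / c)"
proof -
  obtain t0 where t0: "xplus f \<alpha> \<le> t0" "Falpha f \<alpha> t0 = y / c" using Finv_ex[OF y] by blast
  have ft: "Finv f \<alpha> (y / c) = t0" by (rule Finv_eq) (use t0 in auto)
  have "Finv (dil c f) \<alpha> y = (THE t. xplus (dil c f) \<alpha> \<le> t \<and> Falpha (dil c f) \<alpha> t = y)"
    by (simp add: Finv_def)
  also have "\<dots> = c * t0"
  proof (rule the_equality)
    show "xplus (dil c f) \<alpha> \<le> c * t0 \<and> Falpha (dil c f) \<alpha> (c * t0) = y"
      using c t0 by (simp add: xplus_dil Falpha_dil)
  next
    fix t assume "xplus (dil c f) \<alpha> \<le> t \<and> Falpha (dil c f) \<alpha> t = y"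
    then have "c * xplus f \<alpha> \<le> t" "c * Falpha f \<alpha> (t / c) = y" using c by (simp_all add: xplus_dil Falpha_dil)
    then have h1: "xplus f \<alpha> \<le> t / c" using c by (simp add: pos_le_divide_eq[OF c] mult.commute)
    have "Falpha f \<alpha> (t / c) = (c * Falpha f \<alpha> (t / c)) / c" using c by simp
    also have "\<dots> = y / c" using \<open>c * Falpha f \<alpha> (t / c) = y\<close> by simp
    finally have "t / c = t0" using t0 F_inj[OF h1 t0(1)] by simp
    then show "t = c * t0" using c by (simp add: divide_eq_eq)
  qed
  finally show ?thesis using ft by simp
qed

lemma phi_dil: assumes c: "c > 0" shows "phi (dil c f) \<alpha> x = c * phi f \<alpha> (x / c)"
proof -
  have "phi (dil c f) \<alpha> x = Finv (dil c f) \<alpha> (c * Falpha f \<alpha> (x / c))"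
    using c by (simp add: phi_def Falpha_dil)
  also have "\<dots> = c * Finv f \<alpha> (c * Falpha f \<alpha> (x / c) / c)"
    by (rule Finv_dil[OF c]) (use c F_ge_min in simp)
  also have "\<dots> = c * phi f \<alpha> (x / c)" using c by (simp add: phi_def)
  finally show ?thesis .
qed

lemma delta_dil: assumes c: "c > 0" shows "delta (dil c f) \<alpha> x = c * delta f \<alpha> (x / c)"
  using c by (simp add: delta_def Falpha_dil phi_dil right_diff_distrib)

lemma salpha_dil: assumes c: "c > 0" shows "salpha (dil c f) \<alpha> = c * salpha f \<alpha>"
  using c by (simp add: salpha_def xplus_dil delta_dil distrib_left)

lemma tau_dil: assumes c: "c > 0" and y: "y / c \<le> salpha f \<alpha>"
  shows "tau (dil c f) \<alpha> y = c * tau f \<alpha> (y / c)"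
proof -
  define t0 where "t0 = tau f \<alpha> (y / c)"
  have t0: "t0 \<le> xplus f \<alpha>" "t0 + delta f \<alpha> t0 = y / c" using tau_prop[OF y] by (auto simp: t0_def)
  have "tau (dil c f) \<alpha> y = (THE x. x \<le> xplus (dil c f) \<alpha> \<and> x + delta (dil c f) \<alpha> x = y)"
    by (simp add: tau_def)
  also have "\<dots> = c * t0"
  proof (rule the_equality)
    have "c * t0 + c * delta f \<alpha> t0 = c * (t0 + delta f \<alpha> t0)" by (rule distrib_left[symmetric])
    also have "\<dots> = y" using t0(2) c by simp
    finally have e: "c * t0 + c * delta f \<alpha> t0 = y" .
    have "c * t0 \<le> c * xplus f \<alpha>" using c t0(1) by simp
    moreover have "delta (dil c f) \<alpha> (c * t0) = c * delta f \<alpha> t0" using delta_dil[OF c, of "c * t0"] c by simp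
    ultimately show "c * t0 \<le> xplus (dil c f) \<alpha> \<and> c * t0 + delta (dil c f) \<alpha> (c * t0) = y"
      using e xplus_dil[OF c] by simp
  next
    fix x assume a: "x \<le> xplus (dil c f) \<alpha> \<and> x + delta (dil c f) \<alpha> x = y"
    have x1: "x \<le> c * xplus f \<alpha>" using a xplus_dil[OF c] by simp
    have x2: "x + c * delta f \<alpha> (x / c) = y" using a delta_dil[OF c, of x] by simp
    have h1: "x / c \<le> xplus f \<alpha>" using x1 c by (simp add: pos_divide_le_eq mult.commute)
    have "y / c = (x + c * delta f \<alpha> (x / c)) / c" using x2 by simp
    also have "\<dots> = x / c + delta f \<alpha> (x / c)" using c by (simp add: add_divide_distrib)
    finally have h2: "x / c + delta f \<alpha> (x / c) = y / c" by simp
    have "x / c = t0" using h_inj[OF h1 t0(1)] h2 t0(2) by simp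
    then show "x = c * t0" using c by (simp add: divide_eq_eq)
  qed
  finally show ?thesis by (simp add: t0_def)
qed

lemma Sh_dil: assumes c: "c > 0" shows "Sh \<alpha> (dil c f) = dil c (Sh \<alpha> f)"
proof (rule ext)
  fix x
  show "Sh \<alpha> (dil c f) x = dil c (Sh \<alpha> f) x"
  proof (cases "x / c \<le> salpha f \<alpha>")
    case True
    then have "x \<le> salpha (dil c f) \<alpha>" using c by (simp add: salpha_dil pos_divide_le_eq ac_simps)
    have "Sh \<alpha> (dil c f) x = \<alpha> * x + Falpha (dil c f) \<alpha> (tau (dil c f) \<alpha> x)"
      using \<open>x \<le> salpha (dil c f) \<alpha>\<close> by (simp add: Sh_def)
    also have "\<dots> = \<alpha> * x + c * Falpha f \<alpha> (tau f \<alpha> (x / c))"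
      using c True by (simp add: Falpha_dil tau_dil)
    also have "\<dots> = c * Sh \<alpha> f (x / c)" using True c by (simp add: Sh_def algebra_simps)
    also have "\<dots> = dil c (Sh \<alpha> f) x" by (simp add: dil_def)
    finally show ?thesis .
  next
    case False
    then have "\<not> x \<le> salpha (dil c f) \<alpha>" using c by (simp add: salpha_dil pos_divide_le_eq ac_simps)
    then show ?thesis using False c by (simp add: Sh_def dil_def)
  qed
qed

end

theorem proposition3p25:
  fixes a \<alpha> \<eta> :: real and f :: "real \<Rightarrow> real"
  assumes "a > 0" and "0 \<le> \<alpha>" and "\<alpha> < 1" and "f \<in> classC a"
    and "0 < \<eta>" and "\<eta> < 1"
  shows "Sh \<alpha> (dil (1 + \<eta> / 2) f) = dil (1 + \<eta> / 2) (Sh \<alpha> f)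
     \<and> Sh \<alpha> (dil (1 - \<eta> / 2) f) = dil (1 - \<eta> / 2) (Sh \<alpha> f)"
proof
  show "Sh \<alpha> (dil (1 + \<eta> / 2) f) = dil (1 + \<eta> / 2) (Sh \<alpha> f)"
    by (rule Sh_dil[OF assms(4,1,2,3)]) (use assms in simp)
  show "Sh \<alpha> (dil (1 - \<eta> / 2) f) = dil (1 - \<eta> / 2) (Sh \<alpha> f)"
    by (rule Sh_dil[OF assms(4,1,2,3)]) (use assms in simp)
qed

end
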